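(* Let $A$ be a finite nonempty set, $m\in\mathbb N_+$, and let $\rho\subseteq A^m$ be a generalized quasiorder. Then for every $n\in\mathbb N_+$ and every $n$-dimensional $m\times\cdots\times m$-array $(a_{i_1,\dots,i_n})_{i_1,\dots,i_n\in\{1,\dots,m\}}$ of elements of $A$ we have: if $\rho\models(a_{i_1,\dots,i_n})$, then $(a_{1,\dots,1},a_{2,\dots,2},\dots,a_{m,\dots,m})\in\rho$.
   Context: An $m$-ary relation $\rho\subseteq A^m$ is reflexive if $(a,\dots,a)\in\rho$ for all $a\in A$. For an $m\times m$-matrix $(a_{ij})$ over $A$, write $\rho\models(a_{ij})$ if every row and every column of the matrix belongs to $\rho$; $\rho$ is (generalized) transitive if $\rho\models(a_{ij})$ implies $(a_{11},\dots,a_{mm})\in\rho$ for every $m\times m$-matrix $(a_{ij})$. A generalized quasiorder is a reflexive and transitive relation. For an $n$-dimensional array $(a_{i_1,\dots,i_n})$ with indices in $\{1,\dots,m\}$, $\rho\models(a_{i_1,\dots,i_n})$ means: for every $j\in\{1,\dots,n\}$ and every fixed choice of the indices $i_1,\dots,i_{j-1},i_{j+1},\dots,i_n$, the $m$-tuple $(a_{i_1,\dots,i_{j-1},1,i_{j+1},\dots,i_n},\dots,a_{i_1,\dots,i_{j-1},m,i_{j+1},\dots,i_n})$ belongs to $\rho$. *)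

theory Defs
  imports Main
begin

(* m-ary relations on A are sets of lists of length m over A; indices are 0-based:
   the paper's index i in {1..m} corresponds to i-1 in {0..<m}. *)

definition is_rel :: "'a set \<Rightarrow> nat \<Rightarrow> 'a list set \<Rightarrow> bool" where
  "is_rel A m \<rho> \<longleftrightarrow> \<rho> \<subseteq> {xs. length xs = m \<and> set xs \<subseteq> A}"

definition reflexive_rel :: "'a set \<Rightarrow> nat \<Rightarrow> 'a list set \<Rightarrow> bool" where
  "reflexive_rel A m \<rho> \<longleftrightarrow> (\<forall>a\<in>A. replicate m a \<in> \<rho>)"

definition models_matrix :: "nat \<Rightarrow> 'a list set \<Rightarrow> (nat \<Rightarrow> nat \<Rightarrow> 'a) \<Rightarrow> bool" where
  "models_matrix m \<rho> M \<longleftrightarrow>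
     (\<forall>i<m. map (\<lambda>j. M i j) [0..<m] \<in> \<rho>) \<and> (\<forall>j<m. map (\<lambda>i. M i j) [0..<m] \<in> \<rho>)"

definition transitive_rel :: "'a set \<Rightarrow> nat \<Rightarrow> 'a list set \<Rightarrow> bool" where
  "transitive_rel A m \<rho> \<longleftrightarrow>
     (\<forall>M. (\<forall>i<m. \<forall>j<m. M i j \<in> A) \<longrightarrow> models_matrix m \<rho> M \<longrightarrow>
          map (\<lambda>i. M i i) [0..<m] \<in> \<rho>)"

definition gen_quasiorder :: "'a set \<Rightarrow> nat \<Rightarrow> 'a list set \<Rightarrow> bool" where
  "gen_quasiorder A m \<rho> \<longleftrightarrow> is_rel A m \<rho> \<and> reflexive_rel A m \<rho> \<and> transitive_rel A m \<rho>"

definition array_idx :: "nat \<Rightarrow> nat \<Rightarrow> nat list set" where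
  "array_idx n m = {is. length is = n \<and> (\<forall>k\<in>set is. k < m)}"

definition models_array :: "nat \<Rightarrow> nat \<Rightarrow> 'a list set \<Rightarrow> (nat list \<Rightarrow> 'a) \<Rightarrow> bool" where
  "models_array n m \<rho> a \<longleftrightarrow>
     (\<forall>j<n. \<forall>is\<in>array_idx n m. map (\<lambda>t. a (is[j := t])) [0..<m] \<in> \<rho>)"

end

theory Submission
  imports Defs
begin

lemma diag_aux:
  assumes tr: "transitive_rel A m \<rho>"
  shows "n \<ge> 1 \<Longrightarrow> (\<forall>xs\<in>array_idx n m. a xs \<in> A) \<Longrightarrow> models_array n m \<rho> a \<Longrightarrow>
           map (\<lambda>i. a (replicate n i)) [0..<m] \<in> \<rho>"
proof (induction n arbitrary: a rule: nat_induct_at_least)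
  case base
  show ?case
  proof (cases "m = 0")
    case True
    have "(\<lambda>i j. a [0]) = (\<lambda>i j. a [0])" by simp
    from tr have "map (\<lambda>i. (\<lambda>i j. a [0]) i i) [0..<m] \<in> \<rho>"
      unfolding transitive_rel_def models_matrix_def using True by auto
    then show ?thesis using True by simp
  next
    case False
    have "[0] \<in> array_idx 1 m" using False by (simp add: array_idx_def)
    with base(2) have "map (\<lambda>t. a ([0][0 := t])) [0..<m] \<in> \<rho>"
      unfolding models_array_def by blast
    then show ?thesis by simp
  qed
next
  case (Suc n)
  define M where "M i j = a (replicate n i @ [j])" for i j
  have inA: "\<forall>i<m. \<forall>j<m. M i j \<in> A"
    using Suc.prems(1) by (auto simp: M_def array_idx_def)
  have rows: "\<forall>i<m. map (\<lambda>j. M i j) [0..<m] \<in> \<rho>"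
  proof (intro allI impI)
    fix i assume "i < m"
    hence "replicate n i @ [0] \<in> array_idx (Suc n) m" by (auto simp: array_idx_def)
    with Suc.prems(2) have "map (\<lambda>t. a ((replicate n i @ [0])[n := t])) [0..<m] \<in> \<rho>"
      unfolding models_array_def by blast
    moreover have "\<And>t. (replicate n i @ [0])[n := t] = replicate n i @ [t]"
      by (simp add: list_update_append)
    ultimately show "map (\<lambda>j. M i j) [0..<m] \<in> \<rho>" by (simp add: M_def)
  qed
  have cols: "\<forall>j<m. map (\<lambda>i. M i j) [0..<m] \<in> \<rho>"
  proof (intro allI impI)
    fix j assume j: "j < m"
    let ?b = "\<lambda>xs. a (xs @ [j])"
    have "\<forall>xs\<in>array_idx n m. ?b xs \<in> A"
      using Suc.prems(1) j by (auto simp: array_idx_def)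
    moreover have "models_array n m \<rho> ?b"
      unfolding models_array_def
    proof (intro allI impI ballI)
      fix k xs assume k: "k < n" and xs: "xs \<in> array_idx n m"
      have "xs @ [j] \<in> array_idx (Suc n) m" using xs j by (auto simp: array_idx_def)
      moreover have "k < Suc n" using k by simp
      ultimately have "map (\<lambda>t. a ((xs @ [j])[k := t])) [0..<m] \<in> \<rho>"
        using Suc.prems(2) unfolding models_array_def by blast
      moreover have "\<And>t. (xs @ [j])[k := t] = xs[k := t] @ [j]"
        using k xs by (simp add: list_update_append array_idx_def)
      ultimately show "map (\<lambda>t. a (xs[k := t] @ [j])) [0..<m] \<in> \<rho>" by simp
    qed
    ultimately have "map (\<lambda>i. ?b (replicate n i)) [0..<m] \<in> \<rho>"
      using Suc.IH[of ?b] by blast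
    then show "map (\<lambda>i. M i j) [0..<m] \<in> \<rho>" by (simp add: M_def)
  qed
  from tr inA rows cols have "map (\<lambda>i. M i i) [0..<m] \<in> \<rho>"
    unfolding transitive_rel_def models_matrix_def by blast
  moreover have "\<And>i. M i i = a (replicate (Suc n) i)"
    by (simp add: M_def replicate_append_same)
  ultimately show ?case by simp
qed

theorem lemma3p6:
  fixes A :: "'a set" and m :: nat and \<rho> :: "'a list set"
  assumes "finite A" and "A \<noteq> {}" and "m \<ge> 1"
    and "gen_quasiorder A m \<rho>"
  shows "\<forall>n\<ge>1. \<forall>a :: nat list \<Rightarrow> 'a.
           (\<forall>is\<in>array_idx n m. a is \<in> A) \<longrightarrow> models_array n m \<rho> a \<longrightarrow>
           map (\<lambda>i. a (replicate n i)) [0..<m] \<in> \<rho>"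
  using diag_aux[of A m \<rho>] assms(4) unfolding gen_quasiorder_def by blast

end
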